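(* Let $k$ be an algebraically closed field and let $\mathcal{C}\subset\mathbb{P}^3$ be a quadric cone with vertex $v$. Fix an integer $d\ge 2$. Let $Y\in|\mathcal{O}_{\mathcal{C}}(d)|$ be an integral curve with only unibranch singularities and let $\phi:X\to Y$ be its normalization. Fix $q\in\mathcal{C}\setminus Y$ with $q\ne v$ and let $R_q$ be the line of $\mathcal{C}$ containing $q$. Then the linear projection from $q$ restricted to $Y$ is an injective morphism $Y\to\mathbb{P}^2$ (equivalently, its composition with $\phi$ is an injective morphism $X\to\mathbb{P}^2$) if and only if $R_q\cap Y$ consists of exactly one point.
   Context: $\mathcal{O}_{\mathcal{C}}(d)$ is the restriction of $\mathcal{O}_{\mathbb{P}^3}(d)$ to $\mathcal{C}$. *)

theory Defs
  imports "HOL-Computational_Algebra.Polynomial" "HOL-Library.Poly_Mapping"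
begin

(* Homogeneous coordinates on P^3: vectors x :: nat => 'a supported on {0,1,2,3}. *)
definition vec4 :: "(nat \<Rightarrow> 'a::zero) \<Rightarrow> bool" where
  "vec4 x \<longleftrightarrow> (\<forall>i\<ge>4. x i = 0)"

definition ppoint :: "(nat \<Rightarrow> 'a::zero) \<Rightarrow> bool" where
  "ppoint x \<longleftrightarrow> vec4 x \<and> x \<noteq> (\<lambda>_. 0)"

definition same_point :: "(nat \<Rightarrow> 'a::field) \<Rightarrow> (nat \<Rightarrow> 'a) \<Rightarrow> bool" where
  "same_point x y \<longleftrightarrow> (\<exists>c. c \<noteq> 0 \<and> y = (\<lambda>i. c * x i))"

type_synonym 'a mpoly = "(nat \<Rightarrow>\<^sub>0 nat) \<Rightarrow>\<^sub>0 'a"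

definition mpoly_eval :: "'a::comm_ring_1 mpoly \<Rightarrow> (nat \<Rightarrow> 'a) \<Rightarrow> 'a" where
  "mpoly_eval p x = (\<Sum>m\<in>Poly_Mapping.keys p. Poly_Mapping.lookup p m * (\<Prod>i\<in>Poly_Mapping.keys m. x i ^ Poly_Mapping.lookup m i))"

definition in4vars :: "'a::zero mpoly \<Rightarrow> bool" where
  "in4vars p \<longleftrightarrow> (\<forall>m\<in>Poly_Mapping.keys p. Poly_Mapping.keys m \<subseteq> {0..<4})"

definition hom_form :: "nat \<Rightarrow> 'a::zero mpoly \<Rightarrow> bool" where
  "hom_form d p \<longleftrightarrow> in4vars p \<and> (\<forall>m\<in>Poly_Mapping.keys p. (\<Sum>i\<in>Poly_Mapping.keys m. Poly_Mapping.lookup m i) = d)"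

definition ideal_gen :: "'a::comm_ring_1 mpoly list \<Rightarrow> 'a mpoly set" where
  "ideal_gen gs = {p. in4vars p \<and> (\<exists>cs. length cs = length gs \<and> (\<forall>c\<in>set cs. in4vars c)
                     \<and> p = (\<Sum>j<length gs. cs ! j * gs ! j))}"

definition prime_ideal4 :: "'a::comm_ring_1 mpoly set \<Rightarrow> bool" where
  "prime_ideal4 I \<longleftrightarrow> 1 \<notin> I \<and>
     (\<forall>f g. in4vars f \<longrightarrow> in4vars g \<longrightarrow> f * g \<in> I \<longrightarrow> f \<in> I \<or> g \<in> I)"

(* Quadric cone: a quadric surface V(Q) projectively equivalent to x0*x1 = x2^2,
   i.e. Q(L x) = x0*x1 - x2^2 for an invertible linear change of coordinates L;
   its vertex is [L e_3]. *)
definition lin_map4 :: "(nat \<Rightarrow> nat \<Rightarrow> 'a::comm_ring_1) \<Rightarrow> (nat \<Rightarrow> 'a) \<Rightarrow> (nat \<Rightarrow> 'a)" where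
  "lin_map4 A x = (\<lambda>i. if i < 4 then (\<Sum>j<4. A i j * x j) else 0)"

definition invertible4 :: "(nat \<Rightarrow> nat \<Rightarrow> 'a::comm_ring_1) \<Rightarrow> bool" where
  "invertible4 A \<longleftrightarrow> (\<exists>B. \<forall>x. vec4 x \<longrightarrow> lin_map4 B (lin_map4 A x) = x \<and> lin_map4 A (lin_map4 B x) = x)"

definition e3 :: "nat \<Rightarrow> 'a::{zero,one}" where
  "e3 = (\<lambda>i. if i = 3 then 1 else 0)"

definition quadric_cone_with_vertex :: "'a::field mpoly \<Rightarrow> (nat \<Rightarrow> 'a) \<Rightarrow> bool" where
  "quadric_cone_with_vertex Q v \<longleftrightarrow> hom_form 2 Q \<and>
     (\<exists>L. invertible4 L \<and> (\<forall>x. vec4 x \<longrightarrow> mpoly_eval Q (lin_map4 L x) = x 0 * x 1 - x 2 ^ 2)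
          \<and> same_point (lin_map4 L e3) v)"

definition proj_zeros :: "'a::field mpoly list \<Rightarrow> (nat \<Rightarrow> 'a) set" where
  "proj_zeros ps = {x. ppoint x \<and> (\<forall>p\<in>set ps. mpoly_eval p x = 0)}"

(* linear projection from q: y \<mapsto> image of y in k^4/<q>, as a point of P^2 *)
definition same_proj_image :: "(nat \<Rightarrow> 'a::field) \<Rightarrow> (nat \<Rightarrow> 'a) \<Rightarrow> (nat \<Rightarrow> 'a) \<Rightarrow> bool" where
  "same_proj_image q y1 y2 \<longleftrightarrow> (\<exists>c t. c \<noteq> 0 \<and> y2 = (\<lambda>i. c * y1 i + t * q i))"

definition projection_injective_on :: "(nat \<Rightarrow> 'a::field) \<Rightarrow> (nat \<Rightarrow> 'a) set \<Rightarrow> bool" where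
  "projection_injective_on q S \<longleftrightarrow>
     (\<forall>y1\<in>S. \<forall>y2\<in>S. same_proj_image q y1 y2 \<longrightarrow> same_point y1 y2)"

definition proj_line :: "(nat \<Rightarrow> 'a::field) \<Rightarrow> (nat \<Rightarrow> 'a) \<Rightarrow> (nat \<Rightarrow> 'a) set" where
  "proj_line a b = {x. ppoint x \<and> (\<exists>s t. x = (\<lambda>i. s * a i + t * b i))}"

definition exactly_one_point :: "(nat \<Rightarrow> 'a::field) set \<Rightarrow> bool" where
  "exactly_one_point S \<longleftrightarrow> (\<exists>y\<in>S. \<forall>z\<in>S. same_point y z)"

end

theory Submission
  imports Defs
begin

lemma hom_eval:
  assumes "hom_form d p"
  shows "mpoly_eval p (\<lambda>i. c * x i) = c^d * mpoly_eval p x"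
proof -
  have "\<forall>m\<in>Poly_Mapping.keys p. (\<Prod>i\<in>Poly_Mapping.keys m. (c * x i) ^ Poly_Mapping.lookup m i)
        = c^d * (\<Prod>i\<in>Poly_Mapping.keys m. x i ^ Poly_Mapping.lookup m i)"
    using assms by (auto simp: hom_form_def power_mult_distrib prod.distrib power_sum[symmetric])
  then show ?thesis
    by (simp add: mpoly_eval_def sum_distrib_left algebra_simps cong: sum.cong)
qed

lemma line_poly: "\<exists>P. \<forall>t. poly P t = mpoly_eval p (\<lambda>i. t * a i + b i)"
proof
  show "\<forall>t. poly (\<Sum>m\<in>Poly_Mapping.keys p. [:Poly_Mapping.lookup p m:] *
        (\<Prod>i\<in>Poly_Mapping.keys m. [:b i, a i:] ^ Poly_Mapping.lookup m i)) t = mpoly_eval p (\<lambda>i. t * a i + b i)"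
    by (simp add: mpoly_eval_def poly_sum poly_prod algebra_simps)
qed

lemma root_or_const:
  fixes P :: "'a::alg_closed_field poly"
  shows "(\<exists>t. poly P t = 0) \<or> (\<forall>t. poly P t = poly P 0)"
proof (cases "degree P = 0")
  case True
  then obtain c where "P = [:c:]" by (meson degree_eq_zeroE)
  then show ?thesis by simp
next
  case False
  then show ?thesis using alg_closed_imp_poly_has_root by blast
qed

lemma exists_not_unity:
  assumes "d \<ge> 2"
  shows "\<exists>u::'a::alg_closed_field. u \<noteq> 0 \<and> u^d \<noteq> 1"
proof -
  let ?P = "monom (1::'a) d - [:1,1:]"
  have "degree (- [:1::'a,1:]) < degree (monom (1::'a) d)" using assms by (simp add: degree_monom_eq)
  then have "degree (monom (1::'a) d + - [:1,1:]) = d" by (subst degree_add_eq_left) (simp_all add: degree_monom_eq)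
  then have "degree ?P = d" by (metis diff_conv_add_uminus)
  then have "degree ?P > 0" using assms by simp
  then obtain u where u: "poly ?P u = 0" using alg_closed_imp_poly_has_root by blast
  then have "u^d = 1 + u" by (simp add: poly_monom)
  moreover have "u \<noteq> 0" using u assms by (auto simp: poly_monom power_0_left)
  ultimately show ?thesis by auto
qed

lemma cross3:
  fixes a0 a1 a2 b0 b1 b2 :: "'a::field"
  assumes "a0*a1 - a2^2 = 0" "b0*b1 - b2^2 = 0" "a0*b1 + a1*b0 = 2*a2*b2" "a0 \<noteq> 0 \<or> a1 \<noteq> 0"
  shows "\<exists>k. b0 = k*a0 \<and> b1 = k*a1 \<and> b2 = k*a2"
proof -
  have "(a0*b1 - a1*b0)^2 = 0" using assms(1-3) by algebra
  then have e1: "a0*b1 = a1*b0" by simp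
  have "(a0*b2 - a2*b0)^2 = 0" using assms(1-3) by algebra
  then have e2: "a0*b2 = a2*b0" by simp
  have "(a1*b2 - a2*b1)^2 = 0" using assms(1-3) by algebra
  then have e3: "a1*b2 = a2*b1" by simp
  show ?thesis
  proof (cases "a0 = 0")
    case False
    show ?thesis by (rule exI[of _ "b0/a0"]) (use False e1 e2 in \<open>auto simp: field_simps\<close>)
  next
    case True
    then have "a1 \<noteq> 0" using assms(4) by simp
    show ?thesis by (rule exI[of _ "b1/a1"]) (use True \<open>a1 \<noteq> 0\<close> e1 e3 in \<open>auto simp: field_simps\<close>)
  qed
qed


lemma lin_comb: "lin_map4 A (\<lambda>i. s * x i + t * y i) = (\<lambda>i. s * lin_map4 A x i + t * lin_map4 A y i)"
  by (rule ext) (simp add: lin_map4_def sum.distrib sum_distrib_left algebra_simps)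

lemma lin_zero: "lin_map4 A (\<lambda>_. 0) = (\<lambda>_. 0)"
  by (rule ext) (simp add: lin_map4_def)

lemma vec4_lin: "vec4 (lin_map4 A x)"
  by (simp add: vec4_def lin_map4_def)

lemma vec4_comb: "vec4 (x::nat\<Rightarrow>'a::comm_ring_1) \<Longrightarrow> vec4 y \<Longrightarrow> vec4 (\<lambda>i. s * x i + t * y i)"
  by (simp add: vec4_def)

lemma vec4_e3: "vec4 e3"
  by (simp add: vec4_def e3_def)

lemma same_point_trans2:
  assumes "same_point y y1" "same_point y y2" shows "same_point y1 y2"
proof -
  obtain a where a: "a \<noteq> 0" "y1 = (\<lambda>i. a * y i)" using assms(1) by (auto simp: same_point_def)
  obtain b where b: "b \<noteq> 0" "y2 = (\<lambda>i. b * y i)" using assms(2) by (auto simp: same_point_def)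
  show ?thesis unfolding same_point_def
    by (rule exI[of _ "b/a"]) (use a b in \<open>auto simp: field_simps\<close>)
qed


theorem proposition4p5:
  fixes Q F :: "'a::alg_closed_field mpoly"
    and v q :: "nat \<Rightarrow> 'a"
    and d :: nat
  assumes cone: "quadric_cone_with_vertex Q v"
    and d2: "d \<ge> 2"
    and F_form: "hom_form d F"
    and F_nontriv: "F \<notin> ideal_gen [Q]"
    and Y_integral: "prime_ideal4 (ideal_gen [Q, F])"
    and q_C: "q \<in> proj_zeros [Q]"
    and q_notY: "q \<notin> proj_zeros [Q, F]"
    and q_ne_v: "\<not> same_point v q"
  shows "projection_injective_on q (proj_zeros [Q, F])
           \<longleftrightarrow> exactly_one_point (proj_line v q \<inter> proj_zeros [Q, F])"
proof -
  obtain L where Linv: "invertible4 L"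
    and hQ: "\<And>x. vec4 x \<Longrightarrow> mpoly_eval Q (lin_map4 L x) = x 0 * x 1 - x 2 ^ 2"
    and Lv: "same_point (lin_map4 L e3) v"
    using cone unfolding quadric_cone_with_vertex_def by blast
  obtain B where LB: "\<And>x. vec4 x \<Longrightarrow> lin_map4 B (lin_map4 L x) = x"
    and BL: "\<And>x. vec4 x \<Longrightarrow> lin_map4 L (lin_map4 B x) = x"
    using Linv unfolding invertible4_def by blast
  obtain c0 where c0: "c0 \<noteq> 0" and vdef: "v = (\<lambda>i. c0 * lin_map4 L e3 i)"
    using Lv unfolding same_point_def by blast
  have ppq: "ppoint q" and Qq: "mpoly_eval Q q = 0" using q_C by (auto simp: proj_zeros_def)
  have Fq: "mpoly_eval F q \<noteq> 0" using q_C q_notY by (auto simp: proj_zeros_def)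
  have vq4: "vec4 q" using ppq by (simp add: ppoint_def)
  have q0: "q \<noteq> (\<lambda>_. 0)" using ppq by (simp add: ppoint_def)
  have v4: "vec4 v" by (simp add: vdef vec4_def lin_map4_def)
  have Le3: "lin_map4 L e3 \<noteq> (\<lambda>_. 0)"
  proof
    assume "lin_map4 L e3 = (\<lambda>_. 0)"
    then have "(e3::nat\<Rightarrow>'a) = (\<lambda>_. 0)" using LB[OF vec4_e3] by (simp add: lin_zero)
    then show False by (metis e3_def zero_neq_one)
  qed
  have v0: "v \<noteq> (\<lambda>_. 0)"
  proof
    assume "v = (\<lambda>_. 0)"
    then have "lin_map4 L e3 = (\<lambda>_. 0)" using c0 by (auto simp: vdef fun_eq_iff)
    then show False using Le3 by simp
  qed
  have ppv: "ppoint v" using v4 v0 by (simp add: ppoint_def)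
  have indep: "s = 0 \<and> t = 0" if h: "(\<lambda>i. s * v i + t * q i) = (\<lambda>_. 0)" for s t
  proof (cases "s = 0")
    case True
    then have "(\<lambda>i. t * q i) = (\<lambda>_. 0)" using h by simp
    then have "t = 0" using q0 by (metis (mono_tags) ext mult_eq_0_iff)
    then show ?thesis using True by simp
  next
    case False
    have tne: "t \<noteq> 0"
    proof
      assume "t = 0"
      then have "(\<lambda>i. s * v i) = (\<lambda>_. 0)" using h by simp
      then have "v = (\<lambda>_. 0)" using False by (metis (mono_tags) ext mult_eq_0_iff)
      then show False using v0 by simp
    qed
    have "q = (\<lambda>i. (- s / t) * v i)"
    proof
      fix i
      have e: "s * v i + t * q i = 0" using fun_cong[OF h, of i] by simp
      then have "t * q i = - (s * v i)" by (simp add: eq_neg_iff_add_eq_0 add.commute)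
      then show "q i = (- s / t) * v i" using tne by (simp add: field_simps)
    qed
    then have "same_point v q" using False tne unfolding same_point_def by (intro exI[of _ "- s / t"]) auto
    then show ?thesis using q_ne_v by simp
  qed
  define b where "b = lin_map4 B q"
  have b4: "vec4 b" by (simp add: b_def vec4_lin)
  have qb: "q = lin_map4 L b" using BL[OF vq4] by (simp add: b_def)
  have hb: "b 0 * b 1 - b 2 ^ 2 = 0" using Qq hQ[OF b4] qb by simp
  have line_C: "mpoly_eval Q (\<lambda>i. s * v i + t * q i) = 0" for s t
  proof -
    have "(\<lambda>i. s * v i + t * q i) = lin_map4 L (\<lambda>i. (s * c0) * e3 i + t * b i)"
      by (subst lin_comb) (simp add: vdef qb mult.assoc)
    then have "mpoly_eval Q (\<lambda>i. s * v i + t * q i) = (t * b 0) * (t * b 1) - (t * b 2)^2"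
      using hQ[OF vec4_comb[OF vec4_e3 b4]] by (simp add: e3_def)
    also have "\<dots> = t^2 * (b 0 * b 1 - b 2 ^ 2)" by (simp add: algebra_simps power2_eq_square)
    finally show ?thesis using hb by simp
  qed
  have dpos: "d > 0" using d2 by simp
  have inline: "\<exists>s t. s \<noteq> 0 \<and> y = (\<lambda>i. s * v i + t * q i)"
    if y: "y \<in> proj_line v q" "mpoly_eval F y = 0" for y
  proof -
    obtain s t where py: "ppoint y" and yst: "y = (\<lambda>i. s * v i + t * q i)"
      using y(1) by (auto simp: proj_line_def)
    have "s \<noteq> 0"
    proof
      assume s0: "s = 0"
      then have yt: "y = (\<lambda>i. t * q i)" using yst by simp
      then have "t ^ d * mpoly_eval F q = 0" using y(2) hom_eval[OF F_form] by metis
      then have "t = 0" using Fq by simp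
      then show False using py yt by (simp add: ppoint_def)
    qed
    then show ?thesis using yst by blast
  qed
  have memY: "y \<in> proj_zeros [Q, F] \<longleftrightarrow> ppoint y \<and> mpoly_eval Q y = 0 \<and> mpoly_eval F y = 0" for y
    by (simp add: proj_zeros_def)
  have pt_on: "(\<lambda>i. s * v i + t * q i) \<in> proj_line v q \<inter> proj_zeros [Q, F]"
    if "mpoly_eval F (\<lambda>i. s * v i + t * q i) = 0" "s \<noteq> 0" for s t
  proof -
    have "ppoint (\<lambda>i. s * v i + t * q i)"
      unfolding ppoint_def using vec4_comb[OF v4 vq4] indep that(2) by blast
    then show ?thesis using that line_C by (auto simp: proj_line_def proj_zeros_def)
  qed
  show ?thesis
  proof
    assume inj: "projection_injective_on q (proj_zeros [Q, F])"
    have "\<exists>y0. y0 \<in> proj_line v q \<inter> proj_zeros [Q, F]"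
    proof (cases "mpoly_eval F v = 0")
      case True
      have "mpoly_eval F (\<lambda>i. 1 * v i + 0 * q i) = 0" using True by simp
      then have "(\<lambda>i. 1 * v i + 0 * q i) \<in> proj_line v q \<inter> proj_zeros [Q, F]" by (rule pt_on) simp
      then show ?thesis by blast
    next
      case Fv: False
      obtain P where P: "\<And>t. poly P t = mpoly_eval F (\<lambda>i. t * q i + v i)" using line_poly by blast
      obtain R where R: "\<And>t. poly R t = mpoly_eval F (\<lambda>i. t * v i + q i)" using line_poly by blast
      have P': "poly P t = mpoly_eval F (\<lambda>i. 1 * v i + t * q i)" for t
        by (simp add: P add.commute)
      have R': "poly R t = mpoly_eval F (\<lambda>i. t * v i + 1 * q i)" for t
        by (simp add: R)
      show ?thesis
      proof (cases "\<exists>t. poly P t = 0")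
        case True
        then obtain t where "poly P t = 0" by blast
        then show ?thesis using pt_on[of 1 t] P' by auto
      next
        case nP: False
        show ?thesis
        proof (cases "\<exists>t. poly R t = 0")
          case True
          then obtain t where t: "poly R t = 0" by blast
          have "t \<noteq> 0"
          proof
            assume "t = 0" then show False using t R Fq by simp
          qed
          then show ?thesis using pt_on[of t 1] R' t by auto
        next
          case nR: False
          have cP: "poly P t = poly P 0" for t using root_or_const[of P] nP by blast
          have cR: "poly R t = poly R 0" for t using root_or_const[of R] nR by blast
          obtain u :: 'a where u: "u \<noteq> 0" "u ^ d \<noteq> 1" using exists_not_unity[OF d2] by blast
          have "(\<lambda>i. 1 * v i + u * q i) = (\<lambda>i. u * ((1/u) * v i + 1 * q i))"
            using u by (simp add: fun_eq_iff field_simps)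
          then have "poly P u = u ^ d * poly R (1/u)"
            using P' R' hom_eval[OF F_form] by metis
          then have "poly P 0 = u ^ d * poly R 0" using cP cR by metis
          moreover have "poly P 0 = poly R 0"
            using cP[of 1] cR[of 1] P' R' by simp
          moreover have "poly R 0 \<noteq> 0" using R Fq by simp
          ultimately have "u ^ d = 1" by simp
          then show ?thesis using u by simp
        qed
      qed
    qed
    then obtain y0 where y0: "y0 \<in> proj_line v q \<inter> proj_zeros [Q, F]" by blast
    show "exactly_one_point (proj_line v q \<inter> proj_zeros [Q, F])"
      unfolding exactly_one_point_def
    proof (intro bexI[OF _ y0] ballI)
      fix z assume z: "z \<in> proj_line v q \<inter> proj_zeros [Q, F]"
      obtain s1 t1 where s1: "s1 \<noteq> 0" "y0 = (\<lambda>i. s1 * v i + t1 * q i)"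
        using inline y0 memY by blast
      obtain s2 t2 where s2: "s2 \<noteq> 0" "z = (\<lambda>i. s2 * v i + t2 * q i)"
        using inline z memY by blast
      have "z = (\<lambda>i. (s2/s1) * y0 i + (t2 - s2 * t1 / s1) * q i)"
        using s1 s2 by (simp add: fun_eq_iff field_simps)
      then have "same_proj_image q y0 z" unfolding same_proj_image_def using s1(1) s2(1)
        by (intro exI[of _ "s2/s1"] exI[of _ "t2 - s2 * t1 / s1"]) simp
      then show "same_point y0 z" using inj y0 z unfolding projection_injective_on_def by blast
    qed
  next
    assume "exactly_one_point (proj_line v q \<inter> proj_zeros [Q, F])"
    then obtain y where yS: "y \<in> proj_line v q \<inter> proj_zeros [Q, F]"
      and yall: "\<And>z. z \<in> proj_line v q \<inter> proj_zeros [Q, F] \<Longrightarrow> same_point y z"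
      unfolding exactly_one_point_def by blast
    show "projection_injective_on q (proj_zeros [Q, F])"
      unfolding projection_injective_on_def
    proof (intro ballI impI)
      fix y1 y2 assume y1: "y1 \<in> proj_zeros [Q, F]" and y2: "y2 \<in> proj_zeros [Q, F]"
        and spi: "same_proj_image q y1 y2"
      obtain c t where c: "c \<noteq> 0" and y2d: "y2 = (\<lambda>i. c * y1 i + t * q i)"
        using spi unfolding same_proj_image_def by blast
      show "same_point y1 y2"
      proof (cases "t = 0")
        case True
        then show ?thesis using c y2d unfolding same_point_def by auto
      next
        case tne: False
        have ppy1: "ppoint y1" and Qy1: "mpoly_eval Q y1 = 0" using y1 memY by auto
        have ppy2: "ppoint y2" and Qy2: "mpoly_eval Q y2 = 0" using y2 memY by auto
        have y14: "vec4 y1" using ppy1 by (simp add: ppoint_def)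
        define a where "a = lin_map4 B y1"
        have a4: "vec4 a" by (simp add: a_def vec4_lin)
        have y1a: "y1 = lin_map4 L a" using BL[OF y14] by (simp add: a_def)
        have ha: "a 0 * a 1 - a 2 ^ 2 = 0" using Qy1 hQ[OF a4] y1a by simp
        have "y2 = lin_map4 L (\<lambda>i. c * a i + t * b i)" by (subst lin_comb) (simp add: y2d y1a qb)
        then have "(c * a 0 + t * b 0) * (c * a 1 + t * b 1) - (c * a 2 + t * b 2)^2 = 0"
          using Qy2 hQ[OF vec4_comb[OF a4 b4]] by simp
        then have "c * t * (a 0 * b 1 + a 1 * b 0 - 2 * a 2 * b 2) = 0"
          using ha hb by algebra
        then have bil: "a 0 * b 1 + a 1 * b 0 = 2 * a 2 * b 2" using c tne by simp
        have y1line: "y1 \<in> proj_line v q"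
        proof (cases "a 0 = 0 \<and> a 1 = 0")
          case True
          then have "a 2 = 0" using ha by simp
          have "a = (\<lambda>i. a 3 * e3 i + 0 * e3 i)"
          proof
            fix i
            show "a i = a 3 * e3 i + 0 * e3 i"
            proof (cases "i < 4")
              case i4: True
              then have "i = 0 \<or> i = 1 \<or> i = 2 \<or> i = 3" by auto
              then show ?thesis using True \<open>a 2 = 0\<close> by (auto simp: e3_def)
            next
              case False
              then show ?thesis using a4 by (simp add: vec4_def e3_def)
            qed
          qed
          then have "y1 = lin_map4 L (\<lambda>i. a 3 * e3 i + 0 * e3 i)" using y1a by simp
          also have "\<dots> = (\<lambda>i. a 3 * lin_map4 L e3 i + 0 * lin_map4 L e3 i)" by (rule lin_comb)
          finally have "y1 = (\<lambda>i. (a 3 / c0) * v i + 0 * q i)"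
            using c0 by (simp add: vdef fun_eq_iff)
          then show ?thesis using ppy1 unfolding proj_line_def by blast
        next
          case False
          obtain k where k: "b 0 = k * a 0" "b 1 = k * a 1" "b 2 = k * a 2"
            using cross3[OF ha hb bil] False by blast
          define mu where "mu = b 3 - k * a 3"
          have "b = (\<lambda>i. k * a i + mu * e3 i)"
          proof
            fix i
            show "b i = k * a i + mu * e3 i"
            proof (cases "i < 4")
              case i4: True
              then have "i = 0 \<or> i = 1 \<or> i = 2 \<or> i = 3" by auto
              then show ?thesis using k by (auto simp: e3_def mu_def)
            next
              case False
              then show ?thesis using a4 b4 by (simp add: vec4_def e3_def)
            qed
          qed
          then have "q = lin_map4 L (\<lambda>i. k * a i + mu * e3 i)" using qb by simp
          also have "\<dots> = (\<lambda>i. k * lin_map4 L a i + mu * lin_map4 L e3 i)" by (rule lin_comb)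
          finally have qk: "q = (\<lambda>i. k * y1 i + (mu / c0) * v i)"
            using y1a c0 by (simp add: vdef fun_eq_iff)
          have kne: "k \<noteq> 0"
          proof
            assume k0: "k = 0"
            then have qv: "q = (\<lambda>i. (mu / c0) * v i)" using qk by simp
            then have "mu / c0 \<noteq> 0" using q0 by auto
            then have "same_point v q" using qv unfolding same_point_def by blast
            then show False using q_ne_v by simp
          qed
          have "y1 = (\<lambda>i. (- (mu / c0) / k) * v i + (1 / k) * q i)"
            using kne by (simp add: qk fun_eq_iff field_simps)
          then show ?thesis using ppy1 unfolding proj_line_def by blast
        qed
        then obtain s' t' where y1st: "y1 = (\<lambda>i. s' * v i + t' * q i)"
          by (auto simp: proj_line_def)
        have "y2 = (\<lambda>i. (c * s') * v i + (c * t' + t) * q i)"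
          by (simp add: y2d y1st fun_eq_iff algebra_simps)
        then have y2line: "y2 \<in> proj_line v q" using ppy2 unfolding proj_line_def by blast
        show ?thesis using yall y1 y2 y1line y2line same_point_trans2 by blast
      qed
    qed
  qed
qed

end
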